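(* Let $M$ be a compact Riemannian manifold with distance $d$, $r\ge2$, $N$ a metric space and $\mathcal{G}:N\to\mathfrak{X}^r(M)$ a continuous family of vector fields $G_s=\mathcal{G}(s)$, with an open set $U$ which is a trapping region for each $G_s$, and attracting sets $\Lambda_s=\bigcap_{t>0}\overline{\phi^{G_s}_t(U)}$. Suppose the family is robustly expansive on these attracting sets: for every $\epsilon>0$ there is $\delta>0$ such that for all $s\in N$, $x,y\in\Lambda_s$ and $h\in S(\mathbb{R})$, if $d(\phi^{G_s}_t(x),\phi^{G_s}_{h(t)}(y))\le\delta$ for all $t\in\mathbb{R}$, then $\phi^{G_s}_{h(t_0)}(y)\in\phi^{G_s}_{[t_0-\epsilon,t_0+\epsilon]}(x)$ for some $t_0\in\mathbb{R}$. Then there exists $\delta>0$ which is a constant of $h$-expansiveness for each flow $\phi^{G_s}_t$ restricted to $\Lambda_s$, $s\in N$; that is, for every $s\in N$, $h_{loc}(f_s,\delta)=0$, where $f_s=\phi^{G_s}_1|_{\Lambda_s}$.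
   Context: $S(\mathbb{R})$ is the set of surjective increasing continuous functions $\mathbb{R}\to\mathbb{R}$. For a flow $\phi_t$ on a compact invariant set $\Lambda$ and $f=\phi_1$: dynamical balls are $B_t(x,\epsilon)=\{y\in\Lambda: d(\phi_ux,\phi_uy)<\epsilon,\ -t<u<t\}$ and $B^+(x,\epsilon)=\bigcap_{n\ge1}B_n(x,\epsilon)$. A set $F$ $(n,\delta)$-spans $E$ if $E\subset\bigcup_{y\in F}B_n(y,\delta)$; $r_n(E,\delta)$ is the minimal cardinality of an $(n,\delta)$-spanning set of $E$; for compact $K$, $h(f,K)=\lim_{\delta\to0}\limsup_{n\to\infty}\frac1n\log r_n(K,\delta)$; and $h_{loc}(f,\delta)=\sup_{x\in\Lambda}h(f,B^+(x,\delta))$. The flow is entropy expansive ($h$-expansive) with constant $\delta$ if $h_{loc}(f,\delta)=0$. *)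

theory Defs
  imports "HOL-Analysis.Analysis" "HOL-Library.Extended_Real"
begin

text \<open>Abstract setting: a flow \<phi> :: real \<Rightarrow> 'a \<Rightarrow> 'a on a metric space, with a
compact invariant set \<Lambda>. Time-1 map f = \<phi> 1 restricted to \<Lambda>.\<close>

definition S_R :: "(real \<Rightarrow> real) set" where
  "S_R = {h. surj h \<and> strict_mono h \<and> continuous_on UNIV h}"

definition dyn_ball :: "(real \<Rightarrow> 'a::metric_space \<Rightarrow> 'a) \<Rightarrow> 'a set \<Rightarrow> real \<Rightarrow> 'a \<Rightarrow> real \<Rightarrow> 'a set" where
  "dyn_ball \<phi> \<Lambda> t x \<epsilon> = {y \<in> \<Lambda>. \<forall>u. -t < u \<and> u < t \<longrightarrow> dist (\<phi> u x) (\<phi> u y) < \<epsilon>}"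

definition dyn_ball_plus :: "(real \<Rightarrow> 'a::metric_space \<Rightarrow> 'a) \<Rightarrow> 'a set \<Rightarrow> 'a \<Rightarrow> real \<Rightarrow> 'a set" where
  "dyn_ball_plus \<phi> \<Lambda> x \<epsilon> = (\<Inter>n\<in>{1::nat..}. dyn_ball \<phi> \<Lambda> (real n) x \<epsilon>)"

definition spans :: "(real \<Rightarrow> 'a::metric_space \<Rightarrow> 'a) \<Rightarrow> 'a set \<Rightarrow> nat \<Rightarrow> real \<Rightarrow> 'a set \<Rightarrow> 'a set \<Rightarrow> bool" where
  "spans \<phi> \<Lambda> n \<delta> F E \<longleftrightarrow> F \<subseteq> \<Lambda> \<and> E \<subseteq> (\<Union>y\<in>F. dyn_ball \<phi> \<Lambda> (real n) y \<delta>)"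

definition span_num :: "(real \<Rightarrow> 'a::metric_space \<Rightarrow> 'a) \<Rightarrow> 'a set \<Rightarrow> nat \<Rightarrow> 'a set \<Rightarrow> real \<Rightarrow> nat" where
  "span_num \<phi> \<Lambda> n E \<delta> = (LEAST k. \<exists>F. finite F \<and> card F = k \<and> spans \<phi> \<Lambda> n \<delta> F E)"

definition entropy_set :: "(real \<Rightarrow> 'a::metric_space \<Rightarrow> 'a) \<Rightarrow> 'a set \<Rightarrow> 'a set \<Rightarrow> ereal" where
  "entropy_set \<phi> \<Lambda> K =
     Lim (at_right (0::real))
       (\<lambda>\<delta>. limsup (\<lambda>n::nat. ereal (ln (real (span_num \<phi> \<Lambda> n K \<delta>)) / real n)))"

definition h_loc :: "(real \<Rightarrow> 'a::metric_space \<Rightarrow> 'a) \<Rightarrow> 'a set \<Rightarrow> real \<Rightarrow> ereal" where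
  "h_loc \<phi> \<Lambda> \<delta> = (SUP x\<in>\<Lambda>. entropy_set \<phi> \<Lambda> (dyn_ball_plus \<phi> \<Lambda> x \<delta>))"

definition continuous_flow_family :: "'b::metric_space set \<Rightarrow> 'a::metric_space set \<Rightarrow> ('b \<Rightarrow> real \<Rightarrow> 'a \<Rightarrow> 'a) \<Rightarrow> bool" where
  "continuous_flow_family N M \<phi> \<longleftrightarrow>
     (\<forall>s\<in>N. \<forall>x\<in>M. \<phi> s 0 x = x) \<and>
     (\<forall>s\<in>N. \<forall>t u. \<forall>x\<in>M. \<phi> s (t + u) x = \<phi> s t (\<phi> s u x)) \<and>
     (\<forall>s\<in>N. \<forall>t. \<forall>x\<in>M. \<phi> s t x \<in> M) \<and>
     continuous_on (N \<times> UNIV \<times> M) (\<lambda>(s, t, x). \<phi> s t x)"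

definition trapping_region :: "'a::metric_space set \<Rightarrow> (real \<Rightarrow> 'a \<Rightarrow> 'a) \<Rightarrow> 'a set \<Rightarrow> bool" where
  "trapping_region M \<phi> U \<longleftrightarrow> openin (top_of_set M) U \<and> (\<forall>t>0. closure (\<phi> t ` U) \<subseteq> U)"

definition attracting_set :: "(real \<Rightarrow> 'a::metric_space \<Rightarrow> 'a) \<Rightarrow> 'a set \<Rightarrow> 'a set" where
  "attracting_set \<phi> U = (\<Inter>t\<in>{0<..}. closure (\<phi> t ` U))"

end

theory Submission
  imports Defs
begin

lemma entropy_zero:
  assumes "\<And>d. d > 0 \<Longrightarrow> \<exists>C::nat. \<forall>n. span_num \<phi> \<Lambda> n K d \<le> C"
  shows "entropy_set \<phi> \<Lambda> K = 0"
proof -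
  have lim0: "limsup (\<lambda>n::nat. ereal (ln (real (span_num \<phi> \<Lambda> n K d)) / real n)) = 0"
    if dpos: "d > 0" for d
  proof -
    obtain C where C: "\<forall>n. span_num \<phi> \<Lambda> n K d \<le> C" using assms[OF dpos] by blast
    have lnnn: "0 \<le> ln (real k)" for k :: nat
      by (cases "k = 0") auto
    have lnle: "ln (real (span_num \<phi> \<Lambda> n K d)) \<le> ln (real C + 1)" for n
    proof (cases "span_num \<phi> \<Lambda> n K d = 0")
      case True then show ?thesis by simp
    next
      case False
      then show ?thesis using C[rule_format, of n] by (subst ln_le_cancel_iff) auto
    qed
    have "(\<lambda>n::nat. ln (real (span_num \<phi> \<Lambda> n K d)) / real n) \<longlonglongrightarrow> 0"
    proof (rule tendsto_sandwich[of "\<lambda>_. 0" _ _ "\<lambda>n. ln (real C + 1) / real n"])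
      show "\<forall>\<^sub>F n in sequentially. 0 \<le> ln (real (span_num \<phi> \<Lambda> n K d)) / real n"
        using lnnn by (intro always_eventually allI) simp
      show "\<forall>\<^sub>F n in sequentially. ln (real (span_num \<phi> \<Lambda> n K d)) / real n \<le> ln (real C + 1) / real n"
        using lnle by (intro always_eventually allI divide_right_mono) auto
      show "(\<lambda>n. ln (real C + 1) / real n) \<longlonglongrightarrow> 0" by (rule lim_const_over_n)
    qed simp
    then have "(\<lambda>n::nat. ereal (ln (real (span_num \<phi> \<Lambda> n K d)) / real n)) \<longlonglongrightarrow> ereal 0"
      by (rule tendsto_ereal)
    then show ?thesis by (simp add: lim_imp_Limsup zero_ereal_def)
  qed
  have "((\<lambda>d. limsup (\<lambda>n::nat. ereal (ln (real (span_num \<phi> \<Lambda> n K d)) / real n))) \<longlongrightarrow> 0) (at_right (0::real))"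
  proof (rule tendsto_eventually)
    show "\<forall>\<^sub>F d in at_right 0. limsup (\<lambda>n::nat. ereal (ln (real (span_num \<phi> \<Lambda> n K d)) / real n)) = 0"
      unfolding eventually_at_right_field using lim0 by (intro exI[of _ 1]) auto
  qed
  then show ?thesis unfolding entropy_set_def
    by (intro tendsto_Lim) (auto simp: trivial_limit_at_right_real)
qed

lemma span_bounded:
  fixes \<phi> :: "real \<Rightarrow> 'a::metric_space \<Rightarrow> 'a"
  assumes K: "K \<subseteq> \<Lambda>" "K \<subseteq> (\<lambda>a. \<phi> a x) ` {-1..1}"
    and grp: "\<And>u a. \<phi> u (\<phi> a x) = \<phi> a (\<phi> u x)"
    and inM: "\<And>u. \<phi> u x \<in> M"
    and unif: "\<And>e. e > 0 \<Longrightarrow> \<exists>\<eta>>0. \<forall>a\<in>{-1..1}. \<forall>b\<in>{-1..1}. \<forall>w\<in>M. \<bar>a - b\<bar> < \<eta> \<longrightarrow> dist (\<phi> a w) (\<phi> b w) < e"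
    and d: "d > 0"
  shows "\<exists>C. \<forall>n. span_num \<phi> \<Lambda> n K d \<le> C"
proof -
  obtain \<eta> where \<eta>: "\<eta> > 0" "\<forall>a\<in>{-1..1}. \<forall>b\<in>{-1..1}. \<forall>w\<in>M. \<bar>a - b\<bar> < \<eta> \<longrightarrow> dist (\<phi> a w) (\<phi> b w) < d"
    using unif d by blast
  define A where "A = {a\<in>{-1..1::real}. \<phi> a x \<in> K}"
  have "bounded A" unfolding A_def by (rule bounded_subset[OF bounded_closed_interval]) auto
  then have cA: "compact (closure A)" by (simp add: compact_closure)
  have "closure A \<subseteq> (\<Union>a\<in>A. ball a \<eta>)"
  proof
    fix z assume "z \<in> closure A"
    then obtain y where "y \<in> A" "dist y z < \<eta>" using \<eta>(1) unfolding closure_approachable by blast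
    then show "z \<in> (\<Union>a\<in>A. ball a \<eta>)" by auto
  qed
  then obtain A' where A': "A' \<subseteq> A" "finite A'" "closure A \<subseteq> (\<Union>a\<in>A'. ball a \<eta>)"
    using compactE_image[OF cA, of A "\<lambda>a. ball a \<eta>"] by auto
  define F where "F = (\<lambda>a. \<phi> a x) ` A'"
  have fF: "finite F" using A' by (simp add: F_def)
  have sp: "spans \<phi> \<Lambda> n d F K" for n
    unfolding spans_def
  proof
    show "F \<subseteq> \<Lambda>" using A' K unfolding F_def A_def by auto
    show "K \<subseteq> (\<Union>y\<in>F. dyn_ball \<phi> \<Lambda> (real n) y d)"
    proof
      fix z assume z: "z \<in> K"
      then obtain b where b: "b \<in> {-1..1}" "z = \<phi> b x" using K by auto
      then have "b \<in> A" using z by (simp add: A_def)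
      then have "b \<in> closure A" using closure_subset by blast
      then obtain a where a: "a \<in> A'" "dist a b < \<eta>" using A' by auto
      then have aI: "a \<in> {-1..1}" using A' A_def by auto
      have "z \<in> dyn_ball \<phi> \<Lambda> (real n) (\<phi> a x) d"
        unfolding dyn_ball_def
      proof (intro CollectI conjI allI impI)
        show "z \<in> \<Lambda>" using z K by auto
        fix u
        have "dist (\<phi> u (\<phi> a x)) (\<phi> u z) = dist (\<phi> a (\<phi> u x)) (\<phi> b (\<phi> u x))"
          using b grp by simp
        then show "dist (\<phi> u (\<phi> a x)) (\<phi> u z) < d"
          using \<eta>(2) aI b a inM[of u] by (auto simp: dist_real_def)
      qed
      then show "z \<in> (\<Union>y\<in>F. dyn_ball \<phi> \<Lambda> (real n) y d)" using a unfolding F_def by auto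
    qed
  qed
  have "span_num \<phi> \<Lambda> n K d \<le> card F" for n
    unfolding span_num_def using sp fF by (intro Least_le) auto
  then show ?thesis by blast
qed

theorem proposition3p3:
  fixes M :: "'a::metric_space set" and N :: "'b::metric_space set"
    and \<phi> :: "'b \<Rightarrow> real \<Rightarrow> 'a \<Rightarrow> 'a" and U :: "'a set"
  assumes "compact M"
    and "continuous_flow_family N M \<phi>"
    and "U \<noteq> {}"
    and "\<forall>s\<in>N. trapping_region M (\<phi> s) U"
    and robust_exp: "\<forall>\<epsilon>>0. \<exists>\<delta>>0. \<forall>s\<in>N.
           \<forall>x\<in>attracting_set (\<phi> s) U. \<forall>y\<in>attracting_set (\<phi> s) U. \<forall>h\<in>S_R.
             (\<forall>t. dist (\<phi> s t x) (\<phi> s (h t) y) \<le> \<delta>) \<longrightarrow>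
             (\<exists>t0. \<phi> s (h t0) y \<in> (\<lambda>u. \<phi> s u x) ` {t0 - \<epsilon> .. t0 + \<epsilon>})"
  shows "\<exists>\<delta>>0. \<forall>s\<in>N. h_loc (\<phi> s) (attracting_set (\<phi> s) U) \<delta> = 0"
proof -
  obtain \<delta> where \<delta>: "\<delta> > 0" and rob: "\<forall>s\<in>N.
           \<forall>x\<in>attracting_set (\<phi> s) U. \<forall>y\<in>attracting_set (\<phi> s) U. \<forall>h\<in>S_R.
             (\<forall>t. dist (\<phi> s t x) (\<phi> s (h t) y) \<le> \<delta>) \<longrightarrow>
             (\<exists>t0. \<phi> s (h t0) y \<in> (\<lambda>u. \<phi> s u x) ` {t0 - 1 .. t0 + 1})"
    using robust_exp by (metis zero_less_one)
  have idS: "id \<in> S_R" unfolding S_R_def by (auto simp: strict_mono_def)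
  have cM: "closed M" using assms(1) by (rule compact_imp_closed)
  show ?thesis
  proof (intro exI[of _ \<delta>] conjI ballI)
    show "\<delta> > 0" by (rule \<delta>)
    fix s assume s: "s \<in> N"
    have id0: "\<And>x. x \<in> M \<Longrightarrow> \<phi> s 0 x = x"
      and grp: "\<And>t u x. x \<in> M \<Longrightarrow> \<phi> s (t + u) x = \<phi> s t (\<phi> s u x)"
      and inM: "\<And>t x. x \<in> M \<Longrightarrow> \<phi> s t x \<in> M"
      using assms(2) s unfolding continuous_flow_family_def by auto
    have cont: "continuous_on (N \<times> UNIV \<times> M) (\<lambda>(s, t, x). \<phi> s t x)"
      using assms(2) unfolding continuous_flow_family_def by auto
    have UM: "U \<subseteq> M" and trap: "\<And>t. t > 0 \<Longrightarrow> closure (\<phi> s t ` U) \<subseteq> U"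
      using assms(4) s unfolding trapping_region_def by (auto dest: openin_imp_subset)
    define \<Lambda> where "\<Lambda> = attracting_set (\<phi> s) U"
    have clM: "closure (\<phi> s t ` U) \<subseteq> M" for t
      using UM inM cM by (intro closure_minimal) auto
    have \<Lambda>M: "\<Lambda> \<subseteq> M"
      using clM[of 1] unfolding \<Lambda>_def attracting_set_def by auto
    have mono: "closure (\<phi> s t' ` U) \<subseteq> closure (\<phi> s t ` U)" if "0 < t" "t \<le> t'" for t t'
    proof (rule closure_mono, rule subsetI)
      fix y assume "y \<in> \<phi> s t' ` U"
      then obtain u where u: "u \<in> U" "y = \<phi> s t' u" by auto
      show "y \<in> \<phi> s t ` U"
      proof (cases "t = t'")
        case True then show ?thesis using u by auto
      next
        case False
        then have "t' - t > 0" using that by auto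
        then have "\<phi> s (t' - t) u \<in> U" using trap[of "t' - t"] u closure_subset by blast
        moreover have "y = \<phi> s t (\<phi> s (t' - t) u)" using u grp[of u t "t' - t"] UM by auto
        ultimately show ?thesis by auto
      qed
    qed
    have \<Lambda>ne: "\<Lambda> \<noteq> {}"
    proof -
      have "M \<inter> \<Inter>((\<lambda>t. closure (\<phi> s t ` U)) ` {0<..}) \<noteq> {}"
      proof (rule compact_imp_fip[OF assms(1)])
        show "\<And>T. T \<in> (\<lambda>t. closure (\<phi> s t ` U)) ` {0<..} \<Longrightarrow> closed T" by auto
        fix F' assume F': "finite F'" "F' \<subseteq> (\<lambda>t. closure (\<phi> s t ` U)) ` {0<..}"
        then obtain T where T: "T \<subseteq> {0<..}" "finite T" "F' = (\<lambda>t. closure (\<phi> s t ` U)) ` T"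
          by (meson finite_subset_image)
        show "M \<inter> \<Inter> F' \<noteq> {}"
        proof (cases "T = {}")
          case True then show ?thesis using T assms(3) UM by auto
        next
          case False
          define tm where "tm = Max T"
          have tm: "tm \<in> T" "\<And>t. t \<in> T \<Longrightarrow> t \<le> tm" using T False unfolding tm_def by auto
          have "closure (\<phi> s tm ` U) \<subseteq> closure (\<phi> s t ` U)" if "t \<in> T" for t
            using mono[of t tm] T(1) tm that by auto
          then have "closure (\<phi> s tm ` U) \<subseteq> \<Inter> F'" using T(3) by blast
          then have "closure (\<phi> s tm ` U) \<subseteq> M \<inter> \<Inter> F'"
            using clM[of tm] by blast
          moreover have "closure (\<phi> s tm ` U) \<noteq> {}" using assms(3) by (simp add: closure_eq_empty)
          ultimately show ?thesis by (metis subset_empty)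
        qed
      qed
      then show ?thesis unfolding \<Lambda>_def attracting_set_def by (metis inf_bot_right)
    qed
    have unif: "\<exists>\<eta>>0. \<forall>a\<in>{-1..1}. \<forall>b\<in>{-1..1}. \<forall>w\<in>M. \<bar>a - b\<bar> < \<eta> \<longrightarrow> dist (\<phi> s a w) (\<phi> s b w) < e"
      if e: "e > 0" for e :: real
    proof -
      have c1: "continuous_on (UNIV \<times> M) (\<lambda>p. (s, fst p, snd p))"
        by (intro continuous_intros)
      have img: "(\<lambda>p. (s, fst p, snd p)) ` (UNIV \<times> M) \<subseteq> N \<times> UNIV \<times> M" using s by auto
      have "continuous_on (UNIV \<times> M) (\<lambda>p. (\<lambda>(s, t, x). \<phi> s t x) (s, fst p, snd p))"
        by (rule continuous_on_compose2[OF cont c1 img])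
      then have "continuous_on (UNIV \<times> M) (\<lambda>p. \<phi> s (fst p) (snd p))" by (simp add: case_prod_beta)
      then have "continuous_on ({-1..1} \<times> M) (\<lambda>p. \<phi> s (fst p) (snd p))"
        by (rule continuous_on_subset) auto
      then have "uniformly_continuous_on ({-1..1} \<times> M) (\<lambda>p. \<phi> s (fst p) (snd p))"
        by (intro compact_uniformly_continuous compact_Times assms(1)) auto
      then obtain \<eta> where \<eta>: "\<eta> > 0" "\<forall>p\<in>{-1..1} \<times> M. \<forall>p'\<in>{-1..1} \<times> M. dist p' p < \<eta> \<longrightarrow>
          dist (\<phi> s (fst p') (snd p')) (\<phi> s (fst p) (snd p)) < e"
        unfolding uniformly_continuous_on_def using e by blast
      show ?thesis
      proof (intro exI[of _ \<eta>] conjI ballI impI)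
        fix a b w assume ab: "a \<in> {-1..1::real}" "b \<in> {-1..1::real}" "w \<in> M" "\<bar>a - b\<bar> < \<eta>"
        have "dist (a, w) (b, w) < \<eta>" using ab by (simp add: dist_Pair_Pair dist_real_def)
        then show "dist (\<phi> s a w) (\<phi> s b w) < e" using \<eta>(2) ab by (metis fst_conv snd_conv mem_Sigma_iff)
      qed (rule \<eta>(1))
    qed
    have "entropy_set (\<phi> s) \<Lambda> (dyn_ball_plus (\<phi> s) \<Lambda> x \<delta>) = 0" if x: "x \<in> \<Lambda>" for x
    proof (rule entropy_zero)
      fix d :: real assume d: "d > 0"
      have xM: "x \<in> M" using x \<Lambda>M by auto
      show "\<exists>C. \<forall>n. span_num (\<phi> s) \<Lambda> n (dyn_ball_plus (\<phi> s) \<Lambda> x \<delta>) d \<le> C"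
      proof (rule span_bounded[where M = M])
        show "dyn_ball_plus (\<phi> s) \<Lambda> x \<delta> \<subseteq> \<Lambda>"
          unfolding dyn_ball_plus_def dyn_ball_def by auto
        show "dyn_ball_plus (\<phi> s) \<Lambda> x \<delta> \<subseteq> (\<lambda>a. \<phi> s a x) ` {-1..1}"
        proof
          fix y assume y: "y \<in> dyn_ball_plus (\<phi> s) \<Lambda> x \<delta>"
          then have y\<Lambda>: "y \<in> \<Lambda>" unfolding dyn_ball_plus_def dyn_ball_def by auto
          have yM: "y \<in> M" using y\<Lambda> \<Lambda>M by auto
          have close: "dist (\<phi> s t x) (\<phi> s t y) \<le> \<delta>" for t
          proof -
            define n where "n = nat (ceiling \<bar>t\<bar>) + 1"
            have n1: "n \<in> {1..}" unfolding n_def by auto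
            have "-real n < t" "t < real n" unfolding n_def by linarith+
            moreover have "y \<in> dyn_ball (\<phi> s) \<Lambda> (real n) x \<delta>"
              using y n1 unfolding dyn_ball_plus_def by blast
            ultimately have "dist (\<phi> s t x) (\<phi> s t y) < \<delta>"
              unfolding dyn_ball_def by blast
            then show ?thesis by simp
          qed
          have "\<exists>t0. \<phi> s (id t0) y \<in> (\<lambda>u. \<phi> s u x) ` {t0 - 1 .. t0 + 1}"
            using rob[rule_format, OF s, of x y id] x y\<Lambda> idS close unfolding \<Lambda>_def by simp
          then obtain t0 u where tu: "u \<in> {t0 - 1 .. t0 + 1}" "\<phi> s t0 y = \<phi> s u x"
            by auto
          have "y = \<phi> s (- t0 + t0) y" using id0 yM by simp
          also have "\<dots> = \<phi> s (- t0) (\<phi> s u x)" using grp[OF yM, of "- t0" t0] tu(2) by simp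
          also have "\<dots> = \<phi> s (- t0 + u) x" using grp[OF xM, of "- t0" u] by simp
          finally show "y \<in> (\<lambda>a. \<phi> s a x) ` {-1..1}" using tu by (intro image_eqI[of _ _ "- t0 + u"]) auto
        qed
        show "\<phi> s u (\<phi> s a x) = \<phi> s a (\<phi> s u x)" for u a
          using grp[of x u a] grp[of x a u] xM by (simp add: add.commute)
        show "\<phi> s u x \<in> M" for u using inM xM by auto
        show "\<And>e. e > 0 \<Longrightarrow> \<exists>\<eta>>0. \<forall>a\<in>{-1..1}. \<forall>b\<in>{-1..1}. \<forall>w\<in>M. \<bar>a - b\<bar> < \<eta> \<longrightarrow> dist (\<phi> s a w) (\<phi> s b w) < e"
          by (rule unif)
        show "d > 0" by (rule d)
      qed
    qed
    then have "h_loc (\<phi> s) \<Lambda> \<delta> = (SUP x\<in>\<Lambda>. (0::ereal))"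
      unfolding h_loc_def by (intro SUP_cong) auto
    also have "\<dots> = 0" using \<Lambda>ne by simp
    finally show "h_loc (\<phi> s) (attracting_set (\<phi> s) U) \<delta> = 0" unfolding \<Lambda>_def .
  qed
qed

end
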